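(* Let $\mathcal{C}$ be a $q$-ary cyclic code of length $n$ and let $\mathcal{L}$ be a cyclic code of length $n_\ell$ and minimum distance $d_\ell$ over $\mathbb{F}_{q_\ell}=\mathbb{F}_{q^u}$, with $\gcd(n,n_\ell)=1$, which is a non-zero-locator code of $\mathcal{C}$ with integers $\mu$ and $e$ (with respect to $\alpha$ of order $n$ in $\mathbb{F}_{q^s}$ and $\beta$ of order $n_\ell$ in $\mathbb{F}_{q^{us_\ell}}$; let $r=\mathrm{lcm}(s,us_\ell)$). Let $a(x)=\sum_{j\in\mathcal{Z}}a_jx^j\in\mathcal{L}$ be a codeword with support $\mathcal{Z}$, $|\mathcal{Z}|=d_\ell$, and define $f(x)=\prod_{j\in\mathcal{Z}}(1-x\beta^j)$ and $h(x)=\sum_{j\in\mathcal{Z}}a_j\prod_{\ell\in\mathcal{Z},\ell\ne j}(1-x\beta^\ell)$. Fix $\kappa\in\mathcal{Z}$ and put $\gamma_i=\beta^{-\kappa}\alpha^{-i}$ for $i=0,\dots,n-1$. Let $\mathcal{E}\subseteq\{0,\dots,n-1\}$ be a set of error positions and $e_i\in\mathbb{F}_q$, $i\in\mathcal{E}$, the error values, and define $$\Lambda(x)=\prod_{i\in\mathcal{E}}f(x\alpha^i),\qquad \Omega(x)=\sum_{i\in\mathcal{E}}\Big(e_i\alpha^{ie}h(x\alpha^i)\prod_{\ell\in\mathcal{E},\ell\ne i}f(x\alpha^\ell)\Big)$$ in $\mathbb{F}_{q^r}[x]$. Then for every $i\in\mathcal{E}$, $$e_i=\frac{\Omega(\gamma_i)}{\alpha^{ie}\,h(\gamma_i\alpha^i)\prod_{\ell\in\mathcal{E},\ell\ne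 i}f(\gamma_i\alpha^\ell)}=\frac{\Omega(\gamma_i)\,\alpha^{i}\,f'(\gamma_i\alpha^i)}{\Lambda'(\gamma_i)\,\alpha^{ie}\,h(\gamma_i\alpha^i)},$$ where $f'$ and $\Lambda'$ denote formal derivatives.
   Context: A $q$-ary cyclic code of length $n$ ($\gcd(n,q)=1$) is an ideal of $\mathbb{F}_q[x]/(x^n-1)$, codewords identified with polynomials of degree $<n$. Non-zero-locator code: with $\mathcal{C}$, $\mathcal{L}$, $\alpha$, $\beta$ as in the claim, $\mathcal{L}$ is a non-zero-locator code of $\mathcal{C}$ if there exist an integer $\mu\ge 2$ and an integer $e$ such that for all $a(x)\in\mathcal{L}$ and all $c(x)\in\mathcal{C}$, $\sum_{j\ge0}c(\alpha^{j+e})a(\beta^j)x^j\equiv 0\pmod{x^{\mu-1}}$ as formal power series. *)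

theory Defs
  imports "HOL-Computational_Algebra.Polynomial"
begin

definition is_subfield :: "'a::field set \<Rightarrow> bool" where
  "is_subfield K \<longleftrightarrow> 0 \<in> K \<and> 1 \<in> K \<and>
     (\<forall>x\<in>K. \<forall>y\<in>K. x + y \<in> K \<and> x * y \<in> K) \<and>
     (\<forall>x\<in>K. - x \<in> K \<and> inverse x \<in> K)"

definition mult_order_is :: "'a::field \<Rightarrow> nat \<Rightarrow> bool" where
  "mult_order_is x n \<longleftrightarrow> 0 < n \<and> x ^ n = 1 \<and> (\<forall>k. 0 < k \<and> k < n \<longrightarrow> x ^ k \<noteq> 1)"

(* A cyclic code of length n over the subfield K: an ideal of K[x]/(x^n - 1),
   codewords identified with polynomials of degree < n with coefficients in K.
   (K-linear subspace closed under multiplication by x modulo x^n - 1.) *)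
definition cyclic_code :: "'a::field set \<Rightarrow> nat \<Rightarrow> 'a poly set \<Rightarrow> bool" where
  "cyclic_code K n C \<longleftrightarrow>
     0 \<in> C \<and>
     (\<forall>c\<in>C. degree c < n \<and> (\<forall>j. coeff c j \<in> K)) \<and>
     (\<forall>c\<in>C. \<forall>d\<in>C. c + d \<in> C) \<and>
     (\<forall>k\<in>K. \<forall>c\<in>C. smult k c \<in> C) \<and>
     (\<forall>c\<in>C. (pCons 0 c) mod (monom 1 n - 1) \<in> C)"

definition support :: "'a::zero poly \<Rightarrow> nat set" where
  "support p = {j. coeff p j \<noteq> 0}"

definition weight :: "'a::zero poly \<Rightarrow> nat" where
  "weight p = card (support p)"

definition min_distance :: "'a::zero poly set \<Rightarrow> nat" where
  "min_distance C = Min {weight c | c. c \<in> C \<and> c \<noteq> 0}"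

(* L is a non-zero-locator code of C with integers mu and e (w.r.t. alpha, beta):
   the formal power series  sum_j c(alpha^(j+e)) a(beta^j) x^j  vanishes mod x^(mu-1),
   i.e. its coefficients of index j < mu - 1 are zero. *)
definition nonzero_locator_with ::
  "'a::field poly set \<Rightarrow> 'a poly set \<Rightarrow> 'a \<Rightarrow> 'a \<Rightarrow> nat \<Rightarrow> int \<Rightarrow> bool" where
  "nonzero_locator_with C L \<alpha> \<beta> \<mu> e \<longleftrightarrow> 2 \<le> \<mu> \<and>
     (\<forall>a\<in>L. \<forall>c\<in>C. \<forall>j. j < \<mu> - 1 \<longrightarrow>
        poly c (\<alpha> powi (int j + e)) * poly a (\<beta> ^ j) = 0)"

end

theory Submission
  imports Defs "HOL-Number_Theory.Cong"
begin

lemma ord_pow_one: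
  fixes x :: "'a::field"
  assumes "mult_order_is x n" "x ^ a = 1" shows "n dvd a"
proof -
  have n: "0 < n" "x ^ n = 1" "\<forall>k. 0 < k \<and> k < n \<longrightarrow> x ^ k \<noteq> 1"
    using assms(1) unfolding mult_order_is_def by auto
  have "x ^ a = (x ^ n) ^ (a div n) * x ^ (a mod n)"
    by (metis div_mult_mod_eq power_add power_mult mult.commute)
  hence "x ^ (a mod n) = 1" using n assms(2) by simp
  hence "a mod n = 0" using n(3) n(1) by (meson mod_less_divisor neq0_conv)
  thus ?thesis by auto
qed

lemma ord_pow_eq:
  fixes x :: "'a::field"
  assumes "mult_order_is x n" "x ^ a = x ^ b" shows "[a = b] (mod n)"
proof -
  have x0: "x \<noteq> 0" using assms(1) unfolding mult_order_is_def
    by (metis power_0_left zero_neq_one gr_implies_not0)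
  { fix a b :: nat assume ab: "b \<le> a" "x ^ a = x ^ b"
    have "x ^ a = x ^ (a - b) * x ^ b" using ab(1) by (simp add: power_add[symmetric])
    hence "x ^ (a - b) = 1" using ab(2) x0 by simp
    hence "n dvd a - b" using ord_pow_one assms(1) by blast
    hence "[a = b] (mod n)" using ab(1) cong_altdef_nat by blast }
  thus ?thesis using assms(2)
    by (metis cong_sym nat_le_linear)
qed

lemma poly_lin: "poly [:1, - c:] x = 1 - c * (x::'a::field)"
  by simp

lemma poly_pcomp_lin: "poly (pcompose p [:0, c:]) y = poly p (y * (c::'a::field))"
  by (simp add: poly_pcompose mult.commute)

theorem proposition4:
  fixes p m q n n_l u s s_l r d_l \<mu> \<kappa> :: nat
    and e :: int
    and Fq Fql Fqs Fqls :: "'a::{field,finite} set"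
    and \<alpha> \<beta> :: 'a
    and C L :: "'a poly set"
    and a f h \<Lambda> \<Omega> :: "'a poly"
    and Z E :: "nat set"
    and err :: "nat \<Rightarrow> 'a"
    and \<gamma> :: "nat \<Rightarrow> 'a"
  assumes q_def: "prime p" "m \<ge> 1" "q = p ^ m"
    and pos: "n \<ge> 1" "n_l \<ge> 1" "u \<ge> 1" "s \<ge> 1" "s_l \<ge> 1"
    and r_def: "r = lcm s (u * s_l)"
    and card_field: "card (UNIV :: 'a set) = q ^ r"
    and Fq: "is_subfield Fq" "card Fq = q"
    and Fql: "is_subfield Fql" "card Fql = q ^ u"
    and Fqs: "is_subfield Fqs" "card Fqs = q ^ s"
    and Fqls: "is_subfield Fqls" "card Fqls = q ^ (u * s_l)"
    and coprime_nq: "coprime n q"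
    and coprime_nlql: "coprime n_l (q ^ u)"
    and coprime_nnl: "coprime n n_l"
    and C: "cyclic_code Fq n C"
    and L: "cyclic_code Fql n_l L"
    and dl: "d_l = min_distance L"
    and alpha: "\<alpha> \<in> Fqs" "mult_order_is \<alpha> n"
    and beta: "\<beta> \<in> Fqls" "mult_order_is \<beta> n_l"
    and nzl: "nonzero_locator_with C L \<alpha> \<beta> \<mu> e"
    and a: "a \<in> L" "Z = support a" "card Z = d_l"
    and f_def: "f = (\<Prod>j\<in>Z. [:1, - (\<beta> ^ j):])"
    and h_def: "h = (\<Sum>j\<in>Z. smult (coeff a j) (\<Prod>l\<in>Z - {j}. [:1, - (\<beta> ^ l):]))"
    and kappa: "\<kappa> \<in> Z"
    and gamma: "\<And>i. i < n \<Longrightarrow> \<gamma> i = inverse (\<beta> ^ \<kappa>) * inverse (\<alpha> ^ i)"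
    and E: "E \<subseteq> {0..<n}"
    and err: "\<And>i. i \<in> E \<Longrightarrow> err i \<in> Fq"
    and Lambda_def: "\<Lambda> = (\<Prod>i\<in>E. pcompose f [:0, \<alpha> ^ i:])"
    and Omega_def: "\<Omega> = (\<Sum>i\<in>E. smult (err i * \<alpha> powi (int i * e))
                       (pcompose h [:0, \<alpha> ^ i:] * (\<Prod>l\<in>E - {i}. pcompose f [:0, \<alpha> ^ l:])))"
  shows "\<forall>i\<in>E.
     err i = poly \<Omega> (\<gamma> i) /
       (\<alpha> powi (int i * e) * poly h (\<gamma> i * \<alpha> ^ i) * (\<Prod>l\<in>E - {i}. poly f (\<gamma> i * \<alpha> ^ l)))
   \<and> err i = poly \<Omega> (\<gamma> i) * \<alpha> ^ i * poly (pderiv f) (\<gamma> i * \<alpha> ^ i) /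
       (poly (pderiv \<Lambda>) (\<gamma> i) * \<alpha> powi (int i * e) * poly h (\<gamma> i * \<alpha> ^ i))"
proof
  fix i assume iE: "i \<in> E"
  have in_: "i < n" using iE E by auto
  have Efin: "finite E" using E finite_subset by blast
  have Lc: "\<forall>c\<in>L. degree c < n_l \<and> (\<forall>j. coeff c j \<in> Fql)"
    using conjunct1[OF conjunct2[OF L[unfolded cyclic_code_def]]] .
  have a_deg: "degree a < n_l" using bspec[OF Lc a(1)] by (rule conjunct1)
  have Zlt: "j < n_l" if "j \<in> Z" for j
  proof -
    have "coeff a j \<noteq> 0" using that a(2) unfolding support_def by simp
    hence "j \<le> degree a" by (rule le_degree)
    thus ?thesis using a_deg by simp
  qed
  have Zfin: "finite Z" using Zlt by (meson finite_subset subsetI finite_lessThan lessThan_iff)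
  have aord: "\<alpha> \<noteq> 0" using alpha(2) unfolding mult_order_is_def
    by (metis power_0_left zero_neq_one gr_implies_not0)
  have bord: "\<beta> \<noteq> 0" using beta(2) unfolding mult_order_is_def
    by (metis power_0_left zero_neq_one gr_implies_not0)
  have bn: "\<beta> ^ n_l = 1" using beta(2) unfolding mult_order_is_def by auto
  define y where "y = \<gamma> i"
  define x0 where "x0 = inverse (\<beta> ^ \<kappa>)"
  have y: "y = inverse (\<beta> ^ \<kappa>) * inverse (\<alpha> ^ i)" using gamma in_ y_def by auto
  have yx0: "y * \<alpha> ^ i = x0" using y aord unfolding x0_def by (simp add: field_simps)
  have polyf: "\<And>x. poly f x = (\<Prod>j\<in>Z. 1 - \<beta> ^ j * x)" unfolding f_def poly_prod by (simp add: mult.commute)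
  have fx0: "poly f x0 = 0" unfolding polyf using Zfin kappa bord x0_def
    by (simp add: prod_zero_iff) (rule bexI[of _ \<kappa>], auto)
  define G where "G = (\<Prod>l\<in>Z - {\<kappa>}. 1 - \<beta> ^ l * x0)"
  have G: "G \<noteq> 0" unfolding G_def
  proof (subst prod_zero_iff)
    show "finite (Z - {\<kappa>})" using Zfin by auto
    show "\<not> (\<exists>l\<in>Z - {\<kappa>}. 1 - \<beta> ^ l * x0 = 0)"
    proof
      assume "\<exists>l\<in>Z - {\<kappa>}. 1 - \<beta> ^ l * x0 = 0"
      then obtain l where l: "l \<in> Z" "l \<noteq> \<kappa>" "1 - \<beta> ^ l * x0 = 0" by auto
      hence "\<beta> ^ l = \<beta> ^ \<kappa>" using bord unfolding x0_def by (simp add: field_simps)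
      hence "[l = \<kappa>] (mod n_l)" using ord_pow_eq beta(2) by blast
      thus False using cong_less_modulus_unique_nat Zlt l(1,2) kappa by blast
    qed
  qed
  have hx0: "poly h x0 = coeff a \<kappa> * G"
  proof -
    have "poly h x0 = (\<Sum>j\<in>Z. coeff a j * (\<Prod>l\<in>Z - {j}. 1 - \<beta> ^ l * x0))"
      unfolding h_def poly_sum by (simp add: poly_prod mult.commute)
    also have "\<dots> = coeff a \<kappa> * G"
    proof (subst sum.remove[OF Zfin kappa], subst sum.neutral)
      show "\<forall>j\<in>Z - {\<kappa>}. coeff a j * (\<Prod>l\<in>Z - {j}. 1 - \<beta> ^ l * x0) = 0"
      proof
        fix j assume j: "j \<in> Z - {\<kappa>}"
        have "(\<Prod>l\<in>Z - {j}. 1 - \<beta> ^ l * x0) = 0"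
          using Zfin j kappa bord x0_def by (simp add: prod_zero_iff) (rule bexI[of _ \<kappa>], auto)
        thus "coeff a j * (\<Prod>l\<in>Z - {j}. 1 - \<beta> ^ l * x0) = 0" by simp
      qed
    qed (simp add: G_def)
    finally show ?thesis .
  qed
  have ak: "coeff a \<kappa> \<noteq> 0" using kappa a(2) unfolding support_def by auto
  have hne: "poly h x0 \<noteq> 0" using hx0 ak G by simp
  have fd: "poly (pderiv f) x0 = - (\<beta> ^ \<kappa>) * G"
  proof -
    define P1 where "P1 = [:1, - (\<beta> ^ \<kappa>):]"
    define g where "g = (\<Prod>l\<in>Z - {\<kappa>}. [:1, - (\<beta> ^ l):])"
    have feq: "f = P1 * g"
      unfolding f_def P1_def g_def by (rule prod.remove[OF Zfin kappa])
    have d: "pderiv f = P1 * pderiv g + g * pderiv P1" unfolding feq by (rule pderiv_mult)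
    have dP: "pderiv P1 = [:- (\<beta> ^ \<kappa>):]" unfolding P1_def by (simp add: pderiv_pCons)
    have P0: "poly P1 x0 = 0" using bord unfolding x0_def P1_def by simp
    have gG: "poly g x0 = G" unfolding g_def G_def by (simp add: poly_prod mult.commute)
    show ?thesis unfolding d using P0 gG dP by simp
  qed
  have fdne: "poly (pderiv f) x0 \<noteq> 0" using fd G bord by simp
  have Fne: "\<And>l. l \<in> E \<Longrightarrow> l \<noteq> i \<Longrightarrow> poly f (y * \<alpha> ^ l) \<noteq> 0"
  proof
    fix l assume l: "l \<in> E" "l \<noteq> i" and "poly f (y * \<alpha> ^ l) = 0"
    then obtain j where j: "j \<in> Z" "1 - \<beta> ^ j * (y * \<alpha> ^ l) = 0"
      unfolding polyf using Zfin by (auto simp: prod_zero_iff)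
    hence "\<beta> ^ j * \<alpha> ^ l = \<beta> ^ \<kappa> * \<alpha> ^ i" using aord bord unfolding y
      by (simp add: field_simps)
    hence "(\<beta> ^ j * \<alpha> ^ l) ^ n_l = (\<beta> ^ \<kappa> * \<alpha> ^ i) ^ n_l" by simp
    hence "(\<beta> ^ n_l) ^ j * \<alpha> ^ (l * n_l) = (\<beta> ^ n_l) ^ \<kappa> * \<alpha> ^ (i * n_l)"
      by (simp add: power_mult_distrib power_mult[symmetric] mult.commute)
    hence "\<alpha> ^ (l * n_l) = \<alpha> ^ (i * n_l)" using bn by simp
    hence "[l * n_l = i * n_l] (mod n)" using ord_pow_eq alpha(2) by blast
    hence "[l = i] (mod n)" using cong_mult_rcancel_nat coprime_nnl
      by (metis coprime_commute)
    thus False using cong_less_modulus_unique_nat l E in_ by auto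
  qed
  define P where "P = (\<Prod>l\<in>E - {i}. poly f (y * \<alpha> ^ l))"
  have Pne: "P \<noteq> 0" unfolding P_def using Efin Fne by (auto simp: prod_zero_iff)
  have zero_other: "\<And>k. k \<in> E \<Longrightarrow> k \<noteq> i \<Longrightarrow> (\<Prod>l\<in>E - {k}. poly f (y * \<alpha> ^ l)) = 0"
    using Efin iE fx0 yx0 by (simp add: prod_zero_iff) (rule bexI[of _ i], auto)
  define A where "A = \<alpha> powi (int i * e)"
  have Ane: "A \<noteq> 0" unfolding A_def using aord by simp
  have Om: "poly \<Omega> y = err i * A * (poly h x0 * P)"
  proof -
    have "poly \<Omega> y = (\<Sum>k\<in>E. err k * \<alpha> powi (int k * e) *
        (poly h (y * \<alpha> ^ k) * (\<Prod>l\<in>E - {k}. poly f (y * \<alpha> ^ l))))"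
      unfolding Omega_def poly_sum poly_prod by (simp add: poly_pcomp_lin poly_prod)
    also have "\<dots> = err i * A * (poly h x0 * P)"
      by (subst sum.remove[OF Efin iE], subst sum.neutral)
         (auto simp: zero_other A_def P_def yx0)
    finally show ?thesis .
  qed
  have Ld: "poly (pderiv \<Lambda>) y = P * (poly (pderiv f) x0 * \<alpha> ^ i)"
  proof -
    have "poly (pderiv \<Lambda>) y = (\<Sum>k\<in>E. (\<Prod>l\<in>E - {k}. poly f (y * \<alpha> ^ l)) *
        (poly (pderiv f) (y * \<alpha> ^ k) * \<alpha> ^ k))"
      unfolding Lambda_def pderiv_prod poly_sum poly_prod
      by (simp add: pderiv_pcompose poly_pcomp_lin pderiv_pCons poly_prod mult_ac)
    also have "\<dots> = P * (poly (pderiv f) x0 * \<alpha> ^ i)"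
      by (subst sum.remove[OF Efin iE], subst sum.neutral)
         (auto simp: zero_other P_def yx0)
    finally show ?thesis .
  qed
  show "err i = poly \<Omega> (\<gamma> i) /
       (\<alpha> powi (int i * e) * poly h (\<gamma> i * \<alpha> ^ i) * (\<Prod>l\<in>E - {i}. poly f (\<gamma> i * \<alpha> ^ l)))
   \<and> err i = poly \<Omega> (\<gamma> i) * \<alpha> ^ i * poly (pderiv f) (\<gamma> i * \<alpha> ^ i) /
       (poly (pderiv \<Lambda>) (\<gamma> i) * \<alpha> powi (int i * e) * poly h (\<gamma> i * \<alpha> ^ i))"
    unfolding y_def[symmetric] A_def[symmetric] P_def[symmetric] yx0 Om Ld
    using Ane Pne hne fdne aord by (simp add: field_simps)
qed

end
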